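(* Let $G=(V,E,w)$ be an undirected graph without self-loops, with $n\ge 2$ vertices, positive edge weights and conductance $\Phi_G>0$. Then every HC tree $\mathcal{T}$ of $G$ satisfies \[ \mathrm{cost}_G(\mathcal{T}) \le \frac{9}{4\Phi_G}\cdot \min\left\{\frac{d_{\mathrm{avg}}}{d_{\min}},\frac{d_{\max}}{d_{\mathrm{avg}}}\right\}\cdot \mathsf{OPT}_G. \]
   Context: $d_u=\sum_{v} w_{uv}$; $d_{\min},d_{\max}$ are the minimum and maximum degree, $d_{\mathrm{avg}}=\sum_u d_u/n$. $\mathrm{vol}(S)=\sum_{u\in S}d_u$. Conductance of nonempty $S$: $\Phi_G(S)=w(S,V\setminus S)/\mathrm{vol}(S)$ where $w(S,T)$ is the total weight of edges between $S$ and $T$; $\Phi_G=\min\{\Phi_G(S):\emptyset\ne S\subset V,\ \mathrm{vol}(S)\le\mathrm{vol}(V)/2\}$. An HC tree is a rooted binary tree whose leaves are in bijection with $V$; $u\vee v$ is the lowest common ancestor; $\mathrm{cost}_G(\mathcal{T})=\sum_{\{u,v\}\in E}w_{uv}|\mathsf{leaves}(\mathcal{T}[u\vee v])|$; $\mathsf{OPT}_G=\min_{\mathcal{T}}\mathrm{cost}_G(\mathcal{T})$. *)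

theory Defs
  imports Main "HOL-Library.Multiset" Complex_Main
begin

text \<open>Weighted undirected graph: finite vertex set V, symmetric weight function
  w :: 'a => 'a => real; an edge {u,v} is present iff w u v > 0.\<close>

definition wgraph :: "'a set \<Rightarrow> ('a \<Rightarrow> 'a \<Rightarrow> real) \<Rightarrow> bool" where
  "wgraph V w \<longleftrightarrow> finite V \<and> (\<forall>u v. w u v = w v u) \<and> (\<forall>u v. w u v \<ge> 0)
     \<and> (\<forall>u v. w u v \<noteq> 0 \<longrightarrow> u \<in> V \<and> v \<in> V)"

definition no_self_loops :: "('a \<Rightarrow> 'a \<Rightarrow> real) \<Rightarrow> bool" where
  "no_self_loops w \<longleftrightarrow> (\<forall>u. w u u = 0)"

definition degree :: "'a set \<Rightarrow> ('a \<Rightarrow> 'a \<Rightarrow> real) \<Rightarrow> 'a \<Rightarrow> real" where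
  "degree V w u = (\<Sum>v\<in>V. w u v)"

definition dmin :: "'a set \<Rightarrow> ('a \<Rightarrow> 'a \<Rightarrow> real) \<Rightarrow> real" where
  "dmin V w = Min (degree V w ` V)"

definition dmax :: "'a set \<Rightarrow> ('a \<Rightarrow> 'a \<Rightarrow> real) \<Rightarrow> real" where
  "dmax V w = Max (degree V w ` V)"

definition davg :: "'a set \<Rightarrow> ('a \<Rightarrow> 'a \<Rightarrow> real) \<Rightarrow> real" where
  "davg V w = (\<Sum>u\<in>V. degree V w u) / real (card V)"

definition vol :: "'a set \<Rightarrow> ('a \<Rightarrow> 'a \<Rightarrow> real) \<Rightarrow> 'a set \<Rightarrow> real" where
  "vol V w S = (\<Sum>u\<in>S. degree V w u)"

definition cut_weight :: "('a \<Rightarrow> 'a \<Rightarrow> real) \<Rightarrow> 'a set \<Rightarrow> 'a set \<Rightarrow> real" where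
  "cut_weight w S T = (\<Sum>u\<in>S. \<Sum>v\<in>T. w u v)"

definition set_conductance :: "'a set \<Rightarrow> ('a \<Rightarrow> 'a \<Rightarrow> real) \<Rightarrow> 'a set \<Rightarrow> real" where
  "set_conductance V w S = cut_weight w S (V - S) / vol V w S"

definition conductance :: "'a set \<Rightarrow> ('a \<Rightarrow> 'a \<Rightarrow> real) \<Rightarrow> real" where
  "conductance V w = Min {set_conductance V w S | S.
      S \<noteq> {} \<and> S \<subset> V \<and> vol V w S \<le> vol V w V / 2}"

datatype 'a bintree = Leaf 'a | Node "'a bintree" "'a bintree"

fun leaves :: "'a bintree \<Rightarrow> 'a multiset" where
  "leaves (Leaf x) = {#x#}"
| "leaves (Node l r) = leaves l + leaves r"

definition hc_tree :: "'a set \<Rightarrow> 'a bintree \<Rightarrow> bool" where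
  "hc_tree V T \<longleftrightarrow> set_mset (leaves T) = V \<and> (\<forall>x. count (leaves T) x \<le> 1)"

text \<open>Number of leaves of the subtree rooted at the lowest common ancestor of u and v.\<close>
fun lca_size :: "'a bintree \<Rightarrow> 'a \<Rightarrow> 'a \<Rightarrow> nat" where
  "lca_size (Leaf x) u v = 1"
| "lca_size (Node l r) u v =
     (if u \<in># leaves l \<and> v \<in># leaves l then lca_size l u v
      else if u \<in># leaves r \<and> v \<in># leaves r then lca_size r u v
      else size (leaves (Node l r)))"

text \<open>cost_G(T) = sum over edges {u,v} of w_uv |leaves(T[u \<or> v])|; each unordered
  pair is counted twice in the ordered double sum, hence the factor 1/2.\<close>
definition hc_cost :: "'a set \<Rightarrow> ('a \<Rightarrow> 'a \<Rightarrow> real) \<Rightarrow> 'a bintree \<Rightarrow> real" where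
  "hc_cost V w T = (\<Sum>u\<in>V. \<Sum>v\<in>V. if u \<noteq> v then w u v * real (lca_size T u v) else 0) / 2"

definition hc_opt :: "'a set \<Rightarrow> ('a \<Rightarrow> 'a \<Rightarrow> real) \<Rightarrow> real" where
  "hc_opt V w = Inf {hc_cost V w T | T. hc_tree V T}"

end

theory Submission
  imports Defs
begin

lemma distinct_mset_eq:
  assumes "\<forall>x. count M x \<le> 1"
  shows "mset_set (set_mset M) = M"
proof (rule multiset_eqI)
  fix x show "count (mset_set (set_mset M)) x = count M x"
  proof -
    have a: "x \<in># M \<Longrightarrow> count M x = 1"
    proof -
      assume "x \<in># M" then have "count M x > 0" by simp
      then show "count M x = 1" using assms[rule_format, of x] by linarith
    qed
    show ?thesis
    proof (cases "x \<in># M")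
      case True then show ?thesis using a by (simp add: count_mset_set')
    next
      case False then show ?thesis by (simp add: count_mset_set' not_in_iff)
    qed
  qed
qed

lemma sum_mset_distinct:
  assumes "\<forall>x. count M x \<le> 1"
  shows "sum_mset (image_mset f M) = sum f (set_mset M)"
  by (metis assms distinct_mset_eq sum_unfold_sum_mset)

lemma size_distinct:
  assumes "\<forall>x. count M x \<le> 1"
  shows "size M = card (set_mset M)"
  by (metis assms distinct_mset_eq size_mset_set)

fun subtrees :: "'a bintree \<Rightarrow> 'a bintree set" where
  "subtrees (Leaf x) = {Leaf x}"
| "subtrees (Node l r) = insert (Node l r) (subtrees l \<union> subtrees r)"

lemma subtree_leaves: "P \<in> subtrees t \<Longrightarrow> leaves P \<subseteq># leaves t"
  by (induction t) (auto intro: subset_mset.order_trans)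

lemma lca_sym: "lca_size t u v = lca_size t v u"
  by (induction t) auto

lemma lca_le: "lca_size t u v \<le> size (leaves t)"
  by (induction t) auto

lemma lca_ge:
  assumes "Node l r \<in> subtrees t" "\<forall>x. count (leaves t) x \<le> 1"
    "(u \<in># leaves l \<and> v \<notin># leaves l) \<or> (u \<in># leaves r \<and> v \<notin># leaves r)"
  shows "size (leaves (Node l r)) \<le> lca_size t u v"
  using assms
proof (induction t)
  case (Leaf x) then show ?case by simp
next
  case (Node l' r')
  have dl: "\<forall>x. count (leaves l') x \<le> 1" and dr: "\<forall>x. count (leaves r') x \<le> 1"
    using Node.prems(2) by (simp_all, metis add_leE)+
  have disj: "\<And>x. x \<in># leaves l' \<Longrightarrow> x \<notin># leaves r'"
  proof -
    fix x assume "x \<in># leaves l'"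
    have "count (leaves l') x + count (leaves r') x \<le> 1" using Node.prems(2) by (metis count_union leaves.simps(2))
    moreover have "count (leaves l') x > 0" using \<open>x \<in># leaves l'\<close> by simp
    ultimately have "count (leaves r') x = 0" by linarith
    then show "x \<notin># leaves r'" by (simp add: not_in_iff)
  qed
  have uP: "u \<in># leaves (Node l r)" using Node.prems(3) by auto
  from Node.prems(1) consider "Node l r = Node l' r'" | "Node l r \<in> subtrees l'" | "Node l r \<in> subtrees r'" by auto
  then show ?case
  proof cases
    case 1
    then show ?thesis using Node.prems(3) disj by auto
  next
    case 2
    have ul: "u \<in># leaves l'" using subtree_leaves[OF 2] uP by (meson mset_subset_eqD)
    show ?thesis
    proof (cases "v \<in># leaves l'")
      case True
      then show ?thesis using Node.IH(1)[OF 2 dl Node.prems(3)] ul by simp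
    next
      case False
      have "size (leaves (Node l r)) \<le> size (leaves (Node l' r'))"
        using size_mset_mono[OF subtree_leaves[OF Node.prems(1)]] by simp
      then show ?thesis using False ul disj by auto
    qed
  next
    case 3
    have ur: "u \<in># leaves r'" using subtree_leaves[OF 3] uP by (meson mset_subset_eqD)
    have unl: "u \<notin># leaves l'" using disj ur by blast
    show ?thesis
    proof (cases "v \<in># leaves r'")
      case True
      then show ?thesis using Node.IH(2)[OF 3 dr Node.prems(3)] ur unl by simp
    next
      case False
      have "size (leaves (Node l r)) \<le> size (leaves (Node l' r'))"
        using size_mset_mono[OF subtree_leaves[OF Node.prems(1)]] by simp
      then show ?thesis using False ur unl by auto
    qed
  qed
qed

definition mu :: "('a \<Rightarrow> real) \<Rightarrow> 'a bintree \<Rightarrow> real" where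
  "mu f t = sum_mset (image_mset f (leaves t))"

lemma descent:
  assumes "\<forall>x\<in>#leaves t. f x \<le> c" "\<forall>x. f x \<ge> 0" "mu f t > c"
  shows "\<exists>l r. Node l r \<in> subtrees t \<and> mu f (Node l r) > c \<and>
     ((mu f l \<le> c \<and> mu f (Node l r) \<le> 2 * mu f l) \<or> (mu f r \<le> c \<and> mu f (Node l r) \<le> 2 * mu f r))"
  using assms
proof (induction t)
  case (Leaf x) then show ?case by (simp add: mu_def)
next
  case (Node l r)
  have sp: "mu f (Node l r) = mu f l + mu f r" by (simp add: mu_def)
  show ?case
  proof (cases "mu f l \<le> c \<and> mu f r \<le> c")
    case True
    then show ?thesis using Node.prems(3) sp by (intro exI[of _ l] exI[of _ r]) auto
  next
    case False
    then consider "mu f l > c" | "mu f r > c" by linarith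
    then show ?thesis
    proof cases
      case 1
      from Node.IH(1)[OF _ Node.prems(2) 1] Node.prems(1) show ?thesis by auto
    next
      case 2
      from Node.IH(2)[OF _ Node.prems(2) 2] Node.prems(1) show ?thesis by auto
    qed
  qed
qed


lemma subtree_distinct:
  "P \<in> subtrees t \<Longrightarrow> \<forall>x. count (leaves t) x \<le> 1 \<Longrightarrow> \<forall>x. count (leaves P) x \<le> 1"
  by (meson mset_subset_eq_count order_trans subtree_leaves)

lemma key:
  fixes f :: "'a \<Rightarrow> real"
  assumes "hc_tree V t" "\<forall>x. f x \<ge> 0" "\<forall>x\<in>V. f x \<le> c" "sum f V > c"
  shows "\<exists>S Q. S \<subseteq> Q \<and> Q \<subseteq> V \<and> sum f S \<le> c \<and> sum f Q \<le> 2 * sum f S \<and> sum f Q > c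
     \<and> (\<forall>u\<in>S. \<forall>v. v \<notin> S \<longrightarrow> card Q \<le> lca_size t u v)"
proof -
  have dist: "\<forall>x. count (leaves t) x \<le> 1" and lv: "set_mset (leaves t) = V"
    using assms(1) by (auto simp: hc_tree_def)
  have "mu f t = sum f V" using sum_mset_distinct[OF dist] lv by (simp add: mu_def)
  then obtain l r where lr: "Node l r \<in> subtrees t" "mu f (Node l r) > c"
    "(mu f l \<le> c \<and> mu f (Node l r) \<le> 2 * mu f l) \<or> (mu f r \<le> c \<and> mu f (Node l r) \<le> 2 * mu f r)"
    using descent[of t f c] assms lv by auto
  have dP: "\<forall>x. count (leaves (Node l r)) x \<le> 1" using subtree_distinct[OF lr(1) dist] .
  have dl: "\<forall>x. count (leaves l) x \<le> 1" and dr: "\<forall>x. count (leaves r) x \<le> 1"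
    using dP by (simp_all, metis add_leE)+
  define Q where "Q = set_mset (leaves (Node l r))"
  have QV: "Q \<subseteq> V" using subtree_leaves[OF lr(1)] lv Q_def by (metis set_mset_mono)
  have muQ: "mu f (Node l r) = sum f Q" using sum_mset_distinct[OF dP] Q_def by (simp add: mu_def)
  have cQ: "card Q = size (leaves (Node l r))" using size_distinct[OF dP] Q_def by simp
  from lr(3) show ?thesis
  proof
    assume h: "mu f l \<le> c \<and> mu f (Node l r) \<le> 2 * mu f l"
    define S where "S = set_mset (leaves l)"
    have "mu f l = sum f S" using sum_mset_distinct[OF dl] S_def by (simp add: mu_def)
    moreover have "S \<subseteq> Q" using S_def Q_def by auto
    moreover have "\<forall>u\<in>S. \<forall>v. v \<notin> S \<longrightarrow> card Q \<le> lca_size t u v"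
      using lca_ge[OF lr(1) dist] cQ S_def by auto
    ultimately show ?thesis using h muQ QV lr(2) by metis
  next
    assume h: "mu f r \<le> c \<and> mu f (Node l r) \<le> 2 * mu f r"
    define S where "S = set_mset (leaves r)"
    have "mu f r = sum f S" using sum_mset_distinct[OF dr] S_def by (simp add: mu_def)
    moreover have "S \<subseteq> Q" using S_def Q_def by auto
    moreover have "\<forall>u\<in>S. \<forall>v. v \<notin> S \<longrightarrow> card Q \<le> lca_size t u v"
      using lca_ge[OF lr(1) dist] cQ S_def by auto
    ultimately show ?thesis using h muQ QV lr(2) by metis
  qed
qed

lemma cut_sym:
  assumes "wgraph V w"
  shows "cut_weight w A B = cut_weight w B A"
proof -
  have "cut_weight w A B = (\<Sum>v\<in>B. \<Sum>u\<in>A. w u v)" unfolding cut_weight_def by (rule sum.swap)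
  also have "\<dots> = cut_weight w B A" unfolding cut_weight_def
    using assms by (simp add: wgraph_def) 
  finally show ?thesis .
qed

lemma cost_lower:
  assumes "wgraph V w" "S \<subseteq> V" "\<forall>u\<in>S. \<forall>v. v \<notin> S \<longrightarrow> m \<le> lca_size t u v"
  shows "real m * cut_weight w S (V - S) \<le> hc_cost V w t"
proof -
  have fin: "finite V" and w0: "\<And>u v. w u v \<ge> 0" and sym: "\<And>u v. w u v = w v u"
    using assms(1) by (auto simp: wgraph_def)
  define g where "g u v = (if (u \<in> S \<and> v \<notin> S) \<or> (u \<notin> S \<and> v \<in> S) then w u v * real m else 0)" for u v
  have le: "g u v \<le> (if u \<noteq> v then w u v * real (lca_size t u v) else 0)" for u v
  proof (cases "(u \<in> S \<and> v \<notin> S) \<or> (u \<notin> S \<and> v \<in> S)")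
    case True
    then have "u \<noteq> v" by auto
    moreover have "m \<le> lca_size t u v" using True assms(3) lca_sym by metis
    ultimately show ?thesis using True w0[of u v] by (simp add: g_def mult_left_mono)
  next
    case False then have "g u v = 0" unfolding g_def by presburger
    then show ?thesis using w0[of u v] by simp
  qed
  have row_S: "(\<Sum>v\<in>V. g u v) = (\<Sum>v\<in>V - S. w u v) * real m" if "u \<in> S" for u
  proof -
    have "(\<Sum>v\<in>V. g u v) = (\<Sum>v\<in>V - S. g u v) + (\<Sum>v\<in>S. g u v)"
      using sum.subset_diff[OF assms(2) fin] .
    also have "(\<Sum>v\<in>S. g u v) = 0" using that by (simp add: g_def)
    also have "(\<Sum>v\<in>V - S. g u v) = (\<Sum>v\<in>V - S. w u v * real m)" using that by (simp add: g_def)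
    finally show ?thesis by (simp add: sum_distrib_right)
  qed
  have row_nS: "(\<Sum>v\<in>V. g u v) = (\<Sum>v\<in>S. w u v) * real m" if "u \<notin> S" for u
  proof -
    have "(\<Sum>v\<in>V. g u v) = (\<Sum>v\<in>V - S. g u v) + (\<Sum>v\<in>S. g u v)"
      using sum.subset_diff[OF assms(2) fin] .
    also have "(\<Sum>v\<in>V - S. g u v) = 0" using that by (simp add: g_def)
    also have "(\<Sum>v\<in>S. g u v) = (\<Sum>v\<in>S. w u v * real m)" using that by (simp add: g_def)
    finally show ?thesis by (simp add: sum_distrib_right)
  qed
  have "(\<Sum>u\<in>V. \<Sum>v\<in>V. g u v) = (\<Sum>u\<in>V - S. \<Sum>v\<in>V. g u v) + (\<Sum>u\<in>S. \<Sum>v\<in>V. g u v)"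
    using sum.subset_diff[OF assms(2) fin] .
  also have "(\<Sum>u\<in>S. \<Sum>v\<in>V. g u v) = (\<Sum>u\<in>S. (\<Sum>v\<in>V - S. w u v) * real m)"
    using row_S by simp
  also have "(\<Sum>u\<in>V - S. \<Sum>v\<in>V. g u v) = (\<Sum>u\<in>V - S. (\<Sum>v\<in>S. w u v) * real m)"
    using row_nS by simp
  also have "(\<Sum>u\<in>V - S. (\<Sum>v\<in>S. w u v) * real m) = cut_weight w (V - S) S * real m"
    by (simp add: cut_weight_def sum_distrib_right)
  also have "cut_weight w (V - S) S = cut_weight w S (V - S)" using cut_sym[OF assms(1)] by metis
  also have "(\<Sum>u\<in>S. (\<Sum>v\<in>V - S. w u v) * real m) = cut_weight w S (V - S) * real m"
    by (simp add: cut_weight_def sum_distrib_right)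
  finally have eq: "(\<Sum>u\<in>V. \<Sum>v\<in>V. g u v) = 2 * (real m * cut_weight w S (V - S))" by simp
  have "(\<Sum>u\<in>V. \<Sum>v\<in>V. g u v) \<le> (\<Sum>u\<in>V. \<Sum>v\<in>V. if u \<noteq> v then w u v * real (lca_size t u v) else 0)"
    by (intro sum_mono le)
  then show ?thesis unfolding hc_cost_def using eq by simp
qed


lemma cond1:
  assumes "wgraph V w" "conductance V w > 0" "S \<noteq> {}" "S \<subset> V" "vol V w S \<le> vol V w V / 2"
  shows "vol V w S > 0 \<and> conductance V w * vol V w S \<le> cut_weight w S (V - S)"
proof -
  have fin: "finite V" using assms(1) by (simp add: wgraph_def)
  let ?X = "{set_conductance V w S | S. S \<noteq> {} \<and> S \<subset> V \<and> vol V w S \<le> vol V w V / 2}"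
  have "?X \<subseteq> set_conductance V w ` Pow V" by auto
  then have finX: "finite ?X" using fin by (meson finite_Pow_iff finite_imageI finite_subset)
  have inX: "set_conductance V w S \<in> ?X" using assms by blast
  have le: "conductance V w \<le> set_conductance V w S"
    unfolding conductance_def using Min_le[OF finX inX] .
  have v0: "vol V w S \<ge> 0" using assms(1) unfolding vol_def degree_def wgraph_def
    by (intro sum_nonneg) auto
  have "vol V w S \<noteq> 0"
  proof
    assume "vol V w S = 0"
    then have "set_conductance V w S = 0" by (simp add: set_conductance_def)
    then show False using le assms(2) by simp
  qed
  then have vp: "vol V w S > 0" using v0 by simp
  have "conductance V w * vol V w S \<le> set_conductance V w S * vol V w S"
    using le vp by (simp add: mult_right_mono)
  also have "\<dots> = cut_weight w S (V - S)" using vp by (simp add: set_conductance_def)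
  finally show ?thesis using vp by simp
qed

lemma vol_split:
  assumes "wgraph V w" "S \<subseteq> V"
  shows "vol V w V = vol V w S + vol V w (V - S)"
proof -
  have "finite V" using assms(1) by (simp add: wgraph_def)
  then show ?thesis using sum.subset_diff[OF assms(2)] unfolding vol_def by (metis add.commute)
qed

lemma cond2:
  assumes "wgraph V w" "conductance V w > 0" "S \<noteq> {}" "S \<subset> V"
  shows "conductance V w * min (vol V w S) (vol V w (V - S)) \<le> cut_weight w S (V - S)"
proof (cases "vol V w S \<le> vol V w V / 2")
  case True
  have "conductance V w * vol V w S \<le> cut_weight w S (V - S)" using cond1[OF assms True] by (rule conjunct2)
  moreover have "conductance V w * min (vol V w S) (vol V w (V - S)) \<le> conductance V w * vol V w S"
    using assms(2) by (intro mult_left_mono) auto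
  ultimately show ?thesis by linarith
next
  case False
  have sp: "vol V w V = vol V w S + vol V w (V - S)" using vol_split assms by blast
  have a1: "V - S \<noteq> {}" and a2: "V - S \<subset> V" using assms(3,4) by auto
  have a3: "vol V w (V - S) \<le> vol V w V / 2" using False sp by simp
  have "conductance V w * vol V w (V - S) \<le> cut_weight w (V - S) (V - (V - S))"
    using cond1[OF assms(1,2) a1 a2 a3] by (rule conjunct2)
  also have "V - (V - S) = S" using assms(4) by auto
  also have "cut_weight w (V - S) S = cut_weight w S (V - S)" using cut_sym[OF assms(1)] by metis
  finally have "conductance V w * vol V w (V - S) \<le> cut_weight w S (V - S)" .
  moreover have "conductance V w * min (vol V w S) (vol V w (V - S)) \<le> conductance V w * vol V w (V - S)"
    using assms(2) by (intro mult_left_mono) auto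
  ultimately show ?thesis by linarith
qed


lemma cost_upper:
  assumes "wgraph V w" "hc_tree V T"
  shows "hc_cost V w T \<le> real (card V) * vol V w V / 2"
proof -
  have w0: "\<And>u v. w u v \<ge> 0" using assms(1) by (auto simp: wgraph_def)
  have dist: "\<forall>x. count (leaves T) x \<le> 1" and lv: "set_mset (leaves T) = V"
    using assms(2) by (auto simp: hc_tree_def)
  have sz: "size (leaves T) = card V" using size_distinct[OF dist] lv by simp
  have "(\<Sum>u\<in>V. \<Sum>v\<in>V. if u \<noteq> v then w u v * real (lca_size T u v) else 0)
        \<le> (\<Sum>u\<in>V. \<Sum>v\<in>V. w u v * real (card V))"
  proof (intro sum_mono)
    fix u v
    have "real (lca_size T u v) \<le> real (card V)" using lca_le[of T u v] sz by simp
    then show "(if u \<noteq> v then w u v * real (lca_size T u v) else 0) \<le> w u v * real (card V)"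
      using w0 by (simp add: mult_left_mono)
  qed
  also have "\<dots> = real (card V) * vol V w V"
    by (simp add: vol_def degree_def sum_distrib_right sum_distrib_left mult.commute)
  finally show ?thesis unfolding hc_cost_def by simp
qed

lemma lowerA:
  assumes "wgraph V w" "conductance V w > 0" "card V \<ge> 2" "hc_tree V T"
    "\<And>u. u \<in> V \<Longrightarrow> dm \<le> degree V w u" "dm \<ge> 0"
  shows "2/9 * conductance V w * dm * real (card V)^2 \<le> hc_cost V w T"
proof -
  let ?n = "real (card V)"
  let ?\<Phi> = "conductance V w"
  have fin: "finite V" using assms(1) by (simp add: wgraph_def)
  obtain S Q where SQ: "S \<subseteq> Q" "Q \<subseteq> V" "sum (\<lambda>_. 1::real) S \<le> 2 * ?n / 3"
    "sum (\<lambda>_. 1::real) Q \<le> 2 * sum (\<lambda>_. 1::real) S" "sum (\<lambda>_. 1::real) Q > 2 * ?n / 3"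
    "\<forall>u\<in>S. \<forall>v. v \<notin> S \<longrightarrow> card Q \<le> lca_size T u v"
    using key[OF assms(4), of "\<lambda>_. 1" "2 * ?n / 3"] assms(3) by auto
  have cS: "real (card S) \<le> 2 * ?n / 3" "real (card Q) \<le> 2 * real (card S)" "real (card Q) > 2 * ?n / 3"
    using SQ(3,4,5) by auto
  have SV: "S \<subseteq> V" using SQ(1,2) by auto
  have cSl: "real (card S) > ?n / 3" using cS by linarith
  have Sne: "S \<noteq> {}" using cSl by auto
  have "S \<noteq> V" using cS assms(3) by auto
  then have Sp: "S \<subset> V" using SV by auto
  have cVS: "real (card (V - S)) = ?n - real (card S)"
    using card_Diff_subset[OF finite_subset[OF SV fin] SV] card_mono[OF fin SV] by simp
  have v1: "vol V w S \<ge> real (card S) * dm" unfolding vol_def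
    using sum_bounded_below[of S dm "degree V w"] assms(5) SV by auto
  have v2: "vol V w (V - S) \<ge> real (card (V - S)) * dm" unfolding vol_def
    using sum_bounded_below[of "V - S" dm "degree V w"] assms(5) by auto
  have "real (card S) * dm \<ge> ?n / 3 * dm" using cSl assms(6) by (intro mult_right_mono) auto
  moreover have "real (card (V - S)) * dm \<ge> ?n / 3 * dm" using cVS cS assms(6) by (intro mult_right_mono) auto
  ultimately have mn: "min (vol V w S) (vol V w (V - S)) \<ge> ?n / 3 * dm" using v1 v2 by linarith
  have "?\<Phi> * (?n / 3 * dm) \<le> ?\<Phi> * min (vol V w S) (vol V w (V - S))"
    using mn assms(2) by (intro mult_left_mono) auto
  also have "\<dots> \<le> cut_weight w S (V - S)" using cond2[OF assms(1,2) Sne Sp] .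
  finally have cut: "?\<Phi> * (?n / 3 * dm) \<le> cut_weight w S (V - S)" .
  have nn: "0 \<le> ?\<Phi> * (?n / 3 * dm)" using assms(2,6) by simp
  have "2 * ?n / 3 * (?\<Phi> * (?n / 3 * dm)) \<le> real (card Q) * (?\<Phi> * (?n / 3 * dm))"
    using cS(3) nn by (intro mult_right_mono) auto
  also have "\<dots> \<le> real (card Q) * cut_weight w S (V - S)" using cut by (intro mult_left_mono) auto
  also have "\<dots> \<le> hc_cost V w T" using cost_lower[OF assms(1) SV] SQ(6) by blast
  finally show ?thesis by (simp add: power2_eq_square algebra_simps)
qed

lemma lowerB:
  assumes "wgraph V w" "conductance V w > 0" "hc_tree V T"
    "\<And>u. u \<in> V \<Longrightarrow> degree V w u \<le> dM" "dM > 0"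
    "\<And>u. u \<in> V \<Longrightarrow> 2 * degree V w u \<le> vol V w V" "vol V w V > 0"
    "\<And>u. degree V w u \<ge> 0"
  shows "2/9 * conductance V w * (vol V w V)^2 / dM \<le> hc_cost V w T"
proof -
  let ?D = "vol V w V"
  let ?\<Phi> = "conductance V w"
  let ?d = "degree V w"
  have fin: "finite V" using assms(1) by (simp add: wgraph_def)
  have sD: "sum ?d V = ?D" by (simp add: vol_def)
  obtain S Q where SQ: "S \<subseteq> Q" "Q \<subseteq> V" "sum ?d S \<le> 2 * ?D / 3"
    "sum ?d Q \<le> 2 * sum ?d S" "sum ?d Q > 2 * ?D / 3"
    "\<forall>u\<in>S. \<forall>v. v \<notin> S \<longrightarrow> card Q \<le> lca_size T u v"
    using key[OF assms(3), of ?d "2 * ?D / 3"] assms(6,7,8) sD by fastforce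
  have SV: "S \<subseteq> V" using SQ(1,2) by auto
  have vS: "vol V w S > ?D / 3" using SQ(4,5) by (simp add: vol_def)
  have Sne: "S \<noteq> {}" using vS assms(7) by (auto simp: vol_def)
  have "S \<noteq> V" using SQ(3) assms(7) sD by auto
  then have Sp: "S \<subset> V" using SV by auto
  have spl: "?D = vol V w S + vol V w (V - S)" using vol_split[OF assms(1) SV] .
  have mn: "min (vol V w S) (vol V w (V - S)) \<ge> ?D / 3" using vS spl SQ(3) by (simp add: vol_def)
  have "?\<Phi> * (?D / 3) \<le> ?\<Phi> * min (vol V w S) (vol V w (V - S))"
    using mn assms(2) by (intro mult_left_mono) auto
  also have "\<dots> \<le> cut_weight w S (V - S)" using cond2[OF assms(1,2) Sne Sp] .
  finally have cut: "?\<Phi> * (?D / 3) \<le> cut_weight w S (V - S)" .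
  have "sum ?d Q \<le> real (card Q) * dM" using sum_bounded_above[of Q ?d dM] assms(4) SQ(2) by auto
  then have "2 * ?D / 3 < real (card Q) * dM" using SQ(5) by linarith
  then have cQ: "2 * ?D / 3 / dM \<le> real (card Q)" using assms(5) by (simp add: divide_le_eq)
  have nn: "0 \<le> ?\<Phi> * (?D / 3)" using assms(2,7) by simp
  have "2 * ?D / 3 / dM * (?\<Phi> * (?D / 3)) \<le> real (card Q) * (?\<Phi> * (?D / 3))"
    using cQ nn by (intro mult_right_mono) auto
  also have "\<dots> \<le> real (card Q) * cut_weight w S (V - S)" using cut by (intro mult_left_mono) auto
  also have "\<dots> \<le> hc_cost V w T" using cost_lower[OF assms(1) SV] SQ(6) by blast
  finally show ?thesis by (simp add: power2_eq_square algebra_simps)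
qed


theorem lemma3p1:
  fixes V :: "'a set" and w :: "'a \<Rightarrow> 'a \<Rightarrow> real" and T :: "'a bintree"
  assumes "wgraph V w" and "no_self_loops w" and "card V \<ge> 2"
    and "conductance V w > 0"
    and "hc_tree V T"
  shows "hc_cost V w T \<le> 9 / (4 * conductance V w)
           * min (davg V w / dmin V w) (dmax V w / davg V w) * hc_opt V w"
proof -
  let ?d = "degree V w"
  let ?n = "real (card V)"
  define D where "D = vol V w V"
  define \<Phi> where "\<Phi> = conductance V w"
  have fin: "finite V" and w0: "\<And>u v. w u v \<ge> 0" and sym: "\<And>u v. w u v = w v u"
    using assms(1) by (auto simp: wgraph_def)
  have nsl: "\<And>u. w u u = 0" using assms(2) by (simp add: no_self_loops_def)
  have Vne: "V \<noteq> {}" using assms(3) by auto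
  have d0: "\<And>u. ?d u \<ge> 0" unfolding degree_def using w0 by (simp add: sum_nonneg)
  have finI: "finite (?d ` V)" using fin by simp
  have dmin_le: "\<And>u. u \<in> V \<Longrightarrow> dmin V w \<le> ?d u" unfolding dmin_def using finI by simp
  have dmax_ge: "\<And>u. u \<in> V \<Longrightarrow> ?d u \<le> dmax V w" unfolding dmax_def using finI by simp
  obtain u0 where u0: "u0 \<in> V" "dmin V w = ?d u0"
    unfolding dmin_def using Min_in[OF finI] Vne by auto
  have half: "2 * ?d u \<le> D" if "u \<in> V" for u
  proof -
    have "?d u = w u u + (\<Sum>v\<in>V - {u}. w u v)" unfolding degree_def using sum.remove[OF fin that] .
    also have "\<dots> = (\<Sum>v\<in>V - {u}. w u v)" using nsl by simp
    also have "\<dots> \<le> (\<Sum>v\<in>V - {u}. ?d v)"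
    proof (intro sum_mono)
      fix v assume "v \<in> V - {u}"
      then have "w v u \<le> ?d v" unfolding degree_def
        using member_le_sum[of u V "w v"] w0 that fin by auto
      then show "w u v \<le> ?d v" using sym by metis
    qed
    finally have "?d u \<le> (\<Sum>v\<in>V - {u}. ?d v)" .
    moreover have "D = ?d u + (\<Sum>v\<in>V - {u}. ?d v)" unfolding D_def vol_def using sum.remove[OF fin that] .
    ultimately show ?thesis by linarith
  qed
  have Phi0: "\<Phi> > 0" using assms(4) \<Phi>_def by simp
  have "card {u0} = 1" by simp
  then have "{u0} \<noteq> V" using assms(3) by (metis numeral_le_one_iff semiring_norm(69))
  then have sub: "{u0} \<subset> V" using u0 by auto
  have "vol V w {u0} \<le> vol V w V / 2" using half[OF u0(1)] by (simp add: vol_def D_def)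
  then have "vol V w {u0} > 0" using cond1[OF assms(1,4) _ sub] by blast
  then have dminp: "dmin V w > 0" using u0 by (simp add: vol_def)
  have dmaxp: "dmax V w > 0" using dmin_le[OF u0(1)] dmax_ge[OF u0(1)] dminp by linarith
  have Dge: "?n * dmin V w \<le> D" unfolding D_def vol_def
    using sum_bounded_below[of V "dmin V w" ?d] dmin_le by auto
  have np: "?n > 0" using assms(3) by simp
  have Dp: "D > 0" using Dge np dminp by (smt (verit) mult_pos_pos)
  have avg: "davg V w = D / ?n" by (simp add: davg_def D_def vol_def)
  define La where "La = 2/9 * \<Phi> * dmin V w * ?n^2"
  define Lb where "Lb = 2/9 * \<Phi> * D^2 / dmax V w"
  let ?X = "{hc_cost V w T | T. hc_tree V T}"
  have Xne: "?X \<noteq> {}" using assms(5) by auto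
  have optA: "La \<le> hc_opt V w" unfolding hc_opt_def
  proof (rule cInf_greatest[OF Xne])
    fix x assume "x \<in> ?X"
    then obtain T' where "x = hc_cost V w T'" "hc_tree V T'" by auto
    then show "La \<le> x" unfolding La_def \<Phi>_def
      using lowerA[OF assms(1,4,3) _ dmin_le] dminp by auto
  qed
  have optB: "Lb \<le> hc_opt V w" unfolding hc_opt_def
  proof (rule cInf_greatest[OF Xne])
    fix x assume "x \<in> ?X"
    then obtain T' where T': "x = hc_cost V w T'" "hc_tree V T'" by auto
    have "2 * ?d u \<le> vol V w V" if "u \<in> V" for u using half[OF that] D_def by simp
    then show "Lb \<le> x" unfolding Lb_def \<Phi>_def D_def
      using lowerB[OF assms(1,4) T'(2) dmax_ge dmaxp _ _ d0] Dp D_def T'(1) by auto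
  qed
  have up: "hc_cost V w T \<le> ?n * D / 2" using cost_upper[OF assms(1,5)] D_def by simp
  have K0: "9 / (4 * \<Phi>) > 0" using Phi0 by simp
  show ?thesis
  proof (cases "davg V w / dmin V w \<le> dmax V w / davg V w")
    case True
    have c0: "9 / (4 * \<Phi>) * (davg V w / dmin V w) \<ge> 0" using K0 avg Dp np dminp by simp
    have "?n * D / 2 = 9 / (4 * \<Phi>) * (davg V w / dmin V w) * La"
      unfolding La_def avg using Phi0 np dminp by (simp add: field_simps power2_eq_square)
    also have "\<dots> \<le> 9 / (4 * \<Phi>) * (davg V w / dmin V w) * hc_opt V w"
      using optA c0 by (intro mult_left_mono) auto
    finally show ?thesis using up True \<Phi>_def by (simp add: min_def)
  next
    case False
    have c0: "9 / (4 * \<Phi>) * (dmax V w / davg V w) \<ge> 0" using K0 avg Dp np dmaxp by simp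
    have "?n * D / 2 = 9 / (4 * \<Phi>) * (dmax V w / davg V w) * Lb"
      unfolding Lb_def avg using Phi0 np dmaxp Dp by (simp add: field_simps power2_eq_square)
    also have "\<dots> \<le> 9 / (4 * \<Phi>) * (dmax V w / davg V w) * hc_opt V w"
      using optB c0 by (intro mult_left_mono) auto
    finally show ?thesis using up False \<Phi>_def by (simp add: min_def)
  qed
qed

end
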